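(* For every integer $n\geq 1$, $$c_n(231,2143 : 231)=c_n(312,2143 : 312)=\begin{cases}\frac{4k^3+3k^2-k}{6}+1 & \text{if } n=2k,\\ \frac{4k^3+9k^2+5k}{6}+1 & \text{if } n=2k+1.\end{cases}$$
   Context: $S_n$ is the symmetric group on $[n]=\{1,\dots,n\}$, and a permutation $\pi\in S_n$ is written in one-line notation $\pi=\pi_1\pi_2\cdots\pi_n$ with $\pi_i=\pi(i)$. For $\tau\in S_k$, $k\le n$, $\pi$ contains $\tau$ if there are indices $i_1<\dots<i_k$ with $\pi_{i_s}>\pi_{i_t}$ iff $\tau_s>\tau_t$ for all $1\le s<t\le k$; otherwise $\pi$ avoids $\tau$. $\pi^2$ denotes the composition $\pi\circ\pi$. For patterns $\sigma_1,\sigma_2,\rho$, $c_n(\sigma_1,\sigma_2 : \rho)$ denotes the number of permutations $\pi\in S_n$ such that $\pi$ avoids both $\sigma_1$ and $\sigma_2$ and $\pi^2$ avoids $\rho$. *)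

theory Defs
  imports "HOL-Combinatorics.Permutations" Complex_Main
begin

text \<open>Permutations of [n] = {1..n} are functions nat => nat with pi permutes {1..n}.
  A pattern tau in S_k is given in one-line notation as a list [tau_1,...,tau_k].\<close>

definition contains :: "nat \<Rightarrow> (nat \<Rightarrow> nat) \<Rightarrow> nat list \<Rightarrow> bool" where
  "contains n \<pi> \<tau> \<longleftrightarrow> length \<tau> \<le> n \<and>
     (\<exists>idx :: nat \<Rightarrow> nat.
        (\<forall>s \<in> {1..length \<tau>}. idx s \<in> {1..n}) \<and>
        (\<forall>s \<in> {1..length \<tau>}. \<forall>t \<in> {1..length \<tau>}. s < t \<longrightarrow> idx s < idx t) \<and>
        (\<forall>s \<in> {1..length \<tau>}. \<forall>t \<in> {1..length \<tau>}. s < t \<longrightarrow>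
            (\<pi> (idx s) > \<pi> (idx t) \<longleftrightarrow> \<tau> ! (s - 1) > \<tau> ! (t - 1))))"

definition avoids :: "nat \<Rightarrow> (nat \<Rightarrow> nat) \<Rightarrow> nat list \<Rightarrow> bool" where
  "avoids n \<pi> \<tau> \<longleftrightarrow> \<not> contains n \<pi> \<tau>"

definition c_count :: "nat \<Rightarrow> nat list \<Rightarrow> nat list \<Rightarrow> nat list \<Rightarrow> nat" where
  "c_count n \<sigma>1 \<sigma>2 \<rho> = card {\<pi>. \<pi> permutes {1..n} \<and> avoids n \<pi> \<sigma>1 \<and> avoids n \<pi> \<sigma>2
                                   \<and> avoids n (\<pi> \<circ> \<pi>) \<rho>}"

end

theory Submission
  imports Defs
begin


definition c231 :: "nat \<Rightarrow> (nat \<Rightarrow> nat) \<Rightarrow> bool" where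
  "c231 n f \<longleftrightarrow> (\<exists>i j k. 1 \<le> i \<and> i < j \<and> j < k \<and> k \<le> n \<and> f k < f i \<and> f i < f j)"
definition c312 :: "nat \<Rightarrow> (nat \<Rightarrow> nat) \<Rightarrow> bool" where
  "c312 n f \<longleftrightarrow> (\<exists>i j k. 1 \<le> i \<and> i < j \<and> j < k \<and> k \<le> n \<and> f j < f k \<and> f k < f i)"
definition c2143 :: "nat \<Rightarrow> (nat \<Rightarrow> nat) \<Rightarrow> bool" where
  "c2143 n f \<longleftrightarrow> (\<exists>i j k l. 1 \<le> i \<and> i < j \<and> j < k \<and> k < l \<and> l \<le> n \<and>
       f j < f i \<and> f i < f l \<and> f l < f k)"

lemma set3: "{1..3::nat} = {1,2,3}" by auto
lemma set4: "{1..4::nat} = {1,2,3,4}" by auto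

lemma contains231:
  assumes "inj f"
  shows "contains n f [2,3,1] \<longleftrightarrow> c231 n f"
proof
  assume "contains n f [2,3,1]"
  then obtain idx where h: "\<forall>s \<in> {1..3}. idx s \<in> {1..n}"
    "\<forall>s \<in> {1..3}. \<forall>t \<in> {1..3}. s < t \<longrightarrow> idx s < idx t"
    "\<forall>s \<in> {1..3}. \<forall>t \<in> {1..3}. s < t \<longrightarrow> (f (idx s) > f (idx t) \<longleftrightarrow> [2,3,1::nat] ! (s - 1) > [2,3,1] ! (t - 1))"
    proof -
    have L: "length ([2,3,1]::nat list) = 3" by simp
    show ?thesis using that \<open>contains n f [2,3,1]\<close> unfolding contains_def L by blast
    qed
  hence "idx 1 \<ge> 1" "idx 1 < idx 2" "idx 2 < idx 3" "idx 3 \<le> n"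
    "f (idx 3) < f (idx 1)" "f (idx 1) \<le> f (idx 2)"
    unfolding set3 by auto
  moreover have "f (idx 1) \<noteq> f (idx 2)" using assms \<open>idx 1 < idx 2\<close>
    by (metis inj_eq less_irrefl)
  ultimately show "c231 n f" unfolding c231_def by (metis le_neq_implies_less)
next
  assume "c231 n f"
  then obtain i j k where h: "1 \<le> i" "i < j" "j < k" "k \<le> n" "f k < f i" "f i < f j"
    unfolding c231_def by auto
  define idx where "idx = (\<lambda>t::nat. if t = 1 then i else if t = 2 then j else k)"
  show "contains n f [2,3,1]" unfolding contains_def
    apply (rule conjI)
    using h apply simp
    apply (rule exI[of _ idx])
    unfolding set3 using h by (auto simp: idx_def)
qed

lemma contains312:
  assumes "inj f"
  shows "contains n f [3,1,2] \<longleftrightarrow> c312 n f"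
proof
  assume "contains n f [3,1,2]"
  then obtain idx where h: "\<forall>s \<in> {1..3}. idx s \<in> {1..n}"
    "\<forall>s \<in> {1..3}. \<forall>t \<in> {1..3}. s < t \<longrightarrow> idx s < idx t"
    "\<forall>s \<in> {1..3}. \<forall>t \<in> {1..3}. s < t \<longrightarrow> (f (idx s) > f (idx t) \<longleftrightarrow> [3,1,2::nat] ! (s - 1) > [3,1,2] ! (t - 1))"
    proof -
    have L: "length ([3,1,2]::nat list) = 3" by simp
    show ?thesis using that \<open>contains n f [3,1,2]\<close> unfolding contains_def L by blast
    qed
  hence "idx 1 \<ge> 1" "idx 1 < idx 2" "idx 2 < idx 3" "idx 3 \<le> n"
    "f (idx 3) < f (idx 1)" "f (idx 2) \<le> f (idx 3)"
    unfolding set3 by auto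
  moreover have "f (idx 2) \<noteq> f (idx 3)" using assms \<open>idx 2 < idx 3\<close>
    by (metis inj_eq less_irrefl)
  ultimately show "c312 n f" unfolding c312_def by (metis le_neq_implies_less)
next
  assume "c312 n f"
  then obtain i j k where h: "1 \<le> i" "i < j" "j < k" "k \<le> n" "f j < f k" "f k < f i"
    unfolding c312_def by auto
  define idx where "idx = (\<lambda>t::nat. if t = 1 then i else if t = 2 then j else k)"
  show "contains n f [3,1,2]" unfolding contains_def
    apply (rule conjI)
    using h apply simp
    apply (rule exI[of _ idx])
    unfolding set3 using h by (auto simp: idx_def)
qed

lemma contains2143:
  assumes "inj f"
  shows "contains n f [2,1,4,3] \<longleftrightarrow> c2143 n f"
proof
  assume "contains n f [2,1,4,3]"
  then obtain idx where h: "\<forall>s \<in> {1..4}. idx s \<in> {1..n}"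
    "\<forall>s \<in> {1..4}. \<forall>t \<in> {1..4}. s < t \<longrightarrow> idx s < idx t"
    "\<forall>s \<in> {1..4}. \<forall>t \<in> {1..4}. s < t \<longrightarrow> (f (idx s) > f (idx t) \<longleftrightarrow> [2,1,4,3::nat] ! (s - 1) > [2,1,4,3] ! (t - 1))"
    proof -
    have L: "length ([2,1,4,3]::nat list) = 4" by simp
    show ?thesis using that \<open>contains n f [2,1,4,3]\<close> unfolding contains_def L by blast
    qed
  hence "idx 1 \<ge> 1" "idx 1 < idx 2" "idx 2 < idx 3" "idx 3 < idx 4" "idx 4 \<le> n"
    "f (idx 2) < f (idx 1)" "f (idx 1) \<le> f (idx 4)" "f (idx 4) < f (idx 3)"
    unfolding set4 by auto
  moreover have "f (idx 1) \<noteq> f (idx 4)" using assms \<open>idx 1 < idx 2\<close> \<open>idx 2 < idx 3\<close> \<open>idx 3 < idx 4\<close>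
    by (metis inj_eq less_irrefl less_trans)
  ultimately show "c2143 n f" unfolding c2143_def by (metis le_neq_implies_less)
next
  assume "c2143 n f"
  then obtain i j k l where h: "1 \<le> i" "i < j" "j < k" "k < l" "l \<le> n" "f j < f i" "f i < f l" "f l < f k"
    unfolding c2143_def by auto
  define idx where "idx = (\<lambda>t::nat. if t = 1 then i else if t = 2 then j else if t = 3 then k else l)"
  show "contains n f [2,1,4,3]" unfolding contains_def
    apply (rule conjI)
    using h apply simp
    apply (rule exI[of _ idx])
    unfolding set4 using h by (auto simp: idx_def)
qed

lemma inv231:
  assumes p: "f permutes {1..n}" and c: "c231 n f"
  shows "c312 n (inv f)"
proof -
  obtain i j k where h: "1 \<le> i" "i < j" "j < k" "k \<le> n" "f k < f i" "f i < f j"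
    using c unfolding c231_def by auto
  have r: "f x \<in> {1..n}" if "x \<in> {1..n}" for x using permutes_in_image[OF p] that by auto
  have "f k \<ge> 1" "f j \<le> n" using r[of k] r[of j] h by auto
  moreover have "inv f (f x) = x" for x using permutes_inverses[OF p] by auto
  ultimately show ?thesis unfolding c312_def using h
    by (intro exI[of _ "f k"] exI[of _ "f i"] exI[of _ "f j"]) auto
qed

lemma inv312:
  assumes p: "f permutes {1..n}" and c: "c312 n f"
  shows "c231 n (inv f)"
proof -
  obtain i j k where h: "1 \<le> i" "i < j" "j < k" "k \<le> n" "f j < f k" "f k < f i"
    using c unfolding c312_def by auto
  have r: "f x \<in> {1..n}" if "x \<in> {1..n}" for x using permutes_in_image[OF p] that by auto
  have "f j \<ge> 1" "f i \<le> n" using r[of i] r[of j] h by auto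
  moreover have "inv f (f x) = x" for x using permutes_inverses[OF p] by auto
  ultimately show ?thesis unfolding c231_def using h
    by (intro exI[of _ "f j"] exI[of _ "f k"] exI[of _ "f i"]) auto
qed

lemma inv2143:
  assumes p: "f permutes {1..n}" and c: "c2143 n f"
  shows "c2143 n (inv f)"
proof -
  obtain i j k l where h: "1 \<le> i" "i < j" "j < k" "k < l" "l \<le> n" "f j < f i" "f i < f l" "f l < f k"
    using c unfolding c2143_def by auto
  have r: "f x \<in> {1..n}" if "x \<in> {1..n}" for x using permutes_in_image[OF p] that by auto
  have "f j \<ge> 1" "f k \<le> n" using r[of k] r[of j] h by auto
  moreover have "inv f (f x) = x" for x using permutes_inverses[OF p] by auto
  ultimately show ?thesis unfolding c2143_def using h
    by (intro exI[of _ "f j"] exI[of _ "f i"] exI[of _ "f l"] exI[of _ "f k"]) auto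
qed



definition Q :: "nat \<Rightarrow> nat \<Rightarrow> nat \<Rightarrow> nat \<Rightarrow> nat" where
  "Q s p v x = (if x < s then x else if x < p then v + s - x else if x \<le> v then x + s - p else x)"

definition T :: "nat \<Rightarrow> (nat \<times> nat \<times> nat) set" where
  "T n = {(v,p,s). 1 \<le> s \<and> s < p \<and> p \<le> v \<and> v \<le> n \<and> v + s < 2*p}"

lemma QQ:
  assumes "1 \<le> s" "s < p" "p \<le> v" "v + s < 2*p"
  shows "Q s p v (Q s p v x) = (if x < s then x else if x \<le> v+s-p then 2*s+v-p-x else if x < p then x
     else if x \<le> v then v+p-x else x)"
  using assms unfolding Q_def by auto

lemma Q_inj:
  assumes "1 \<le> s" "s < p" "p \<le> v" "v + s < 2*p"
  shows "inj (Q s p v)"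
  using assms unfolding Q_def inj_on_def by auto

lemma Q_perm:
  assumes "(v,p,s) \<in> T n"
  shows "Q s p v permutes {1..n}"
proof (rule bij_imp_permutes)
  have a: "1 \<le> s" "s < p" "p \<le> v" "v + s < 2*p" "v \<le> n" using assms unfolding T_def by auto
  have i: "inj_on (Q s p v) {1..n}" using Q_inj[OF a(1-4)] by (meson inj_on_subset subset_UNIV)
  have im: "Q s p v ` {1..n} \<subseteq> {1..n}" using a unfolding Q_def by auto
  show "bij_betw (Q s p v) {1..n} {1..n}" unfolding bij_betw_def using i endo_inj_surj[OF _ im i] by auto
  show "\<And>x. x \<notin> {1..n} \<Longrightarrow> Q s p v x = x" using a unfolding Q_def by auto
qed

lemma Q_desc:
  assumes "(v,p,s) \<in> T n" "x < y" "Q s p v y < Q s p v x"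
  shows "s \<le> x \<and> x < p \<and> y \<le> v"
  using assms unfolding T_def Q_def by (auto split: if_splits)

lemma Q_headdec:
  assumes "(v,p,s) \<in> T n" "s \<le> x" "x < y" "y < p"
  shows "Q s p v y < Q s p v x"
  using assms unfolding T_def Q_def by auto

lemma Q_231:
  assumes "(v,p,s) \<in> T n"
  shows "\<not> c231 n (Q s p v)"
proof
  assume "c231 n (Q s p v)"
  then obtain i j k where h: "i < j" "j < k" "Q s p v k < Q s p v i" "Q s p v i < Q s p v j"
    unfolding c231_def by blast
  have "s \<le> i" using Q_desc[OF assms, of i k] h by auto
  moreover have "j < p" using Q_desc[OF assms, of j k] h by auto
  ultimately have "Q s p v j < Q s p v i" using Q_headdec[OF assms, of i j] h by auto
  then show False using h by auto
qed

lemma Q_2143: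
  assumes "(v,p,s) \<in> T n"
  shows "\<not> c2143 n (Q s p v)"
proof
  assume "c2143 n (Q s p v)"
  then obtain i j k l where h: "i < j" "j < k" "k < l" "Q s p v j < Q s p v i"
    "Q s p v i < Q s p v l" "Q s p v l < Q s p v k"
    unfolding c2143_def by blast
  have "s \<le> i" using Q_desc[OF assms, of i j] h by auto
  moreover have "k < p" using Q_desc[OF assms, of k l] h by auto
  ultimately have "Q s p v k < Q s p v i" using Q_headdec[OF assms, of i k] h by auto
  then show False using h by auto
qed

lemma R_desc:
  assumes "(v,p,s) \<in> T n" "x < y"
    "R y < R x"
    "R = (\<lambda>x. if x < s then x else if x \<le> v+s-p then 2*s+v-p-x else if x < p then x
     else if x \<le> v then v+p-x else x)"
  shows "(s \<le> x \<and> y \<le> v+s-p) \<or> (p \<le> x \<and> y \<le> v)"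
  using assms unfolding T_def by (auto split: if_splits)

lemma R_dec:
  assumes "(v,p,s) \<in> T n"
    "R = (\<lambda>x. if x < s then x else if x \<le> v+s-p then 2*s+v-p-x else if x < p then x
     else if x \<le> v then v+p-x else x)"
    "x < y" "(s \<le> x \<and> y \<le> v+s-p) \<or> (p \<le> x \<and> y \<le> v)"
  shows "R y < R x"
  using assms unfolding T_def by auto

lemma QQ_231:
  assumes "(v,p,s) \<in> T n"
  shows "\<not> c231 n (Q s p v \<circ> Q s p v)"
proof
  have a: "1 \<le> s" "s < p" "p \<le> v" "v + s < 2*p" "v \<le> n" using assms unfolding T_def by auto
  define R where "R = (\<lambda>x. if x < s then x else if x \<le> v+s-p then 2*s+v-p-x else if x < p then x
     else if x \<le> v then v+p-x else x)"
  have e: "Q s p v \<circ> Q s p v = R" unfolding R_def o_def QQ[OF a(1-4)] by simp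
  assume "c231 n (Q s p v \<circ> Q s p v)"
  then obtain i j k where h: "i < j" "j < k" "R k < R i" "R i < R j"
    unfolding c231_def e by blast
  have d1: "(s \<le> i \<and> k \<le> v+s-p) \<or> (p \<le> i \<and> k \<le> v)" using R_desc[OF assms _ _ R_def, of i k] h by auto
  have "R j < R i"
  proof (rule R_dec[OF assms R_def])
    show "i < j" by fact
    show "(s \<le> i \<and> j \<le> v+s-p) \<or> (p \<le> i \<and> j \<le> v)" using d1 h by auto
  qed
  then show False using h by auto
qed



lemma inc_lower:
  fixes f :: "nat \<Rightarrow> nat"
  assumes "\<And>x. a \<le> x \<Longrightarrow> x < b \<Longrightarrow> f x < f (Suc x)" "a \<le> x" "x \<le> b"
  shows "f a + (x - a) \<le> f x"
  using assms(2,3)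
proof (induct x rule: dec_induct)
  case base then show ?case by simp
next
  case (step m) then show ?case using assms(1)[of m] by (simp add: Suc_diff_le)
qed

lemma inc_upper:
  fixes f :: "nat \<Rightarrow> nat"
  assumes "\<And>x. a \<le> x \<Longrightarrow> x < b \<Longrightarrow> f x < f (Suc x)" "a \<le> x" "x \<le> b"
  shows "f x + (b - x) \<le> f b"
  using assms(3,2)
proof (induct x rule: inc_induct)
  case base then show ?case by simp
next
  case (step m) then show ?case using assms(1)[of m] by (simp add: Suc_diff_Suc)
qed

lemma dec_lower:
  fixes f :: "nat \<Rightarrow> nat"
  assumes "\<And>x. a \<le> x \<Longrightarrow> x < b \<Longrightarrow> f (Suc x) < f x" "a \<le> x" "x \<le> b"
  shows "f b + (b - x) \<le> f x"
  using assms(3,2)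
proof (induct x rule: inc_induct)
  case base then show ?case by simp
next
  case (step m) then show ?case using assms(1)[of m] by (simp add: Suc_diff_Suc)
qed

lemma dec_upper:
  fixes f :: "nat \<Rightarrow> nat"
  assumes "\<And>x. a \<le> x \<Longrightarrow> x < b \<Longrightarrow> f (Suc x) < f x" "a \<le> x" "x \<le> b"
  shows "f x + (x - a) \<le> f a"
  using assms(2,3)
proof (induct x rule: dec_induct)
  case base then show ?case by simp
next
  case (step m) then show ?case using assms(1)[of m] by (simp add: Suc_diff_le)
qed

lemma char:
  fixes \<pi> :: "nat \<Rightarrow> nat"
  assumes perm: "\<pi> permutes {1..n}" and n1: "\<not> c231 n \<pi>" and n2: "\<not> c2143 n \<pi>"
    and n3: "\<not> c231 n (\<pi> \<circ> \<pi>)" and nid: "\<pi> \<noteq> id"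
  shows "\<exists>v p s. (v,p,s) \<in> T n \<and> \<pi> = Q s p v"
proof -
  have inj: "inj \<pi>" using permutes_inj[OF perm] .
  have injE: "\<And>x y. \<pi> x = \<pi> y \<Longrightarrow> x = y" using inj by (simp add: inj_eq)
  have fix_out: "\<And>x. x \<notin> {1..n} \<Longrightarrow> \<pi> x = x" using permutes_not_in[OF perm] .
  have rng: "\<And>x. x \<in> {1..n} \<Longrightarrow> \<pi> x \<in> {1..n}" using permutes_in_image[OF perm] by auto
  have surj: "\<And>y. \<exists>x. \<pi> x = y" using permutes_surj[OF perm] by (metis surj_def)
  have N231: "\<And>i j k. 1 \<le> i \<Longrightarrow> i < j \<Longrightarrow> j < k \<Longrightarrow> k \<le> n \<Longrightarrow> \<pi> k < \<pi> i \<Longrightarrow> \<pi> i < \<pi> j \<Longrightarrow> False"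
    using n1 unfolding c231_def by blast
  have N2143: "\<And>i j k l. 1 \<le> i \<Longrightarrow> i < j \<Longrightarrow> j < k \<Longrightarrow> k < l \<Longrightarrow> l \<le> n \<Longrightarrow>
       \<pi> j < \<pi> i \<Longrightarrow> \<pi> i < \<pi> l \<Longrightarrow> \<pi> l < \<pi> k \<Longrightarrow> False"
    using n2 unfolding c2143_def by blast
  have NQ: "\<And>i j k. 1 \<le> i \<Longrightarrow> i < j \<Longrightarrow> j < k \<Longrightarrow> k \<le> n \<Longrightarrow> \<pi> (\<pi> k) < \<pi> (\<pi> i) \<Longrightarrow> \<pi> (\<pi> i) < \<pi> (\<pi> j) \<Longrightarrow> False"
    using n3 unfolding c231_def o_def by blast
  have ex: "\<exists>x. \<pi> x \<noteq> x" using nid by auto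
  define s where "s = (LEAST x. \<pi> x \<noteq> x)"
  have s1: "\<pi> s \<noteq> s" using LeastI_ex[OF ex] s_def by auto
  have s2: "\<And>x. x < s \<Longrightarrow> \<pi> x = x" using not_less_Least s_def by blast
  have s_rng: "1 \<le> s" "s \<le> n" using s1 fix_out by auto
  define v where "v = \<pi> s"
  have ge_s: "\<And>x. s \<le> x \<Longrightarrow> s \<le> \<pi> x"
  proof (rule ccontr)
    fix x assume "s \<le> x" "\<not> s \<le> \<pi> x"
    then have "\<pi> (\<pi> x) = \<pi> x" using s2 by auto
    then have "\<pi> x = x" using injE by blast
    then show False using \<open>s \<le> x\<close> \<open>\<not> s \<le> \<pi> x\<close> by simp
  qed
  have sv: "s < v" using ge_s[of s] s1 v_def by auto
  have vn: "v \<le> n" using rng[of s] s_rng v_def by auto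
  have B1: "\<And>x. s < x \<Longrightarrow> x \<le> v \<Longrightarrow> \<pi> x < v"
  proof (rule ccontr)
    fix x assume x: "s < x" "x \<le> v" "\<not> \<pi> x < v"
    have gx: "v < \<pi> x" using x injE[of x s] v_def by fastforce
    have after: "\<And>y. x < y \<Longrightarrow> y \<le> n \<Longrightarrow> v < \<pi> y"
    proof -
      fix y assume y: "x < y" "y \<le> n"
      have "\<not> \<pi> y < v" using N231[of s x y] y x gx s_rng v_def by auto
      moreover have "\<pi> y \<noteq> v" using injE[of y s] v_def y x by auto
      ultimately show "v < \<pi> y" by simp
    qed
    have sub: "{s..<v} \<subseteq> \<pi> ` {s<..<x}"
    proof
      fix w assume w: "w \<in> {s..<v}"
      obtain y where y: "\<pi> y = w" using surj by blast
      have "s \<le> y" using s2[of y] y w by (metis atLeastLessThan_iff not_less order.strict_trans1)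
      moreover have "y \<noteq> s" using y w v_def by auto
      moreover have "y < x"
      proof (rule ccontr)
        assume "\<not> y < x"
        then have "x \<le> y" by simp
        show False
        proof (cases "y = x")
          case True then show False using gx y w by auto
        next
          case False
          show False
          proof (cases "y \<le> n")
            case True then show False using after[of y] False \<open>x \<le> y\<close> y w by auto
          next
            case False then show False using fix_out[of y] y w vn by auto
          qed
        qed
      qed
      ultimately show "w \<in> \<pi> ` {s<..<x}" using y by auto
    qed
    have "card {s..<v} \<le> card (\<pi> ` {s<..<x})" using card_mono[OF _ sub] by simp
    also have "\<dots> \<le> card {s<..<x}" using card_image_le by blast
    finally show False using x by simp
  qed
  have B2: "\<And>x. v < x \<Longrightarrow> x \<le> n \<Longrightarrow> v < \<pi> x"
  proof (rule ccontr)
    fix x assume x: "v < x" "x \<le> n" "\<not> v < \<pi> x"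
    have "x \<noteq> s" using x sv by auto
    then have "\<pi> x \<noteq> v" using injE[of x s] v_def by auto
    then have lx: "\<pi> x < v" using x by auto
    have before: "\<And>y. s < y \<Longrightarrow> y < x \<Longrightarrow> \<pi> y < v"
    proof -
      fix y assume y: "s < y" "y < x"
      have "\<not> v < \<pi> y" using N231[of s y x] y x lx s_rng v_def by auto
      moreover have "\<pi> y \<noteq> v" using injE[of y s] v_def y by auto
      ultimately show "\<pi> y < v" by simp
    qed
    have sub: "\<pi> ` {s<..x} \<subseteq> {s..<v}"
    proof
      fix w assume "w \<in> \<pi> ` {s<..x}"
      then obtain y where y: "y \<in> {s<..x}" "w = \<pi> y" by auto
      then show "w \<in> {s..<v}" using ge_s[of y] before[of y] lx by (cases "y = x") auto
    qed
    have "inj_on \<pi> {s<..x}" using inj by (meson inj_on_subset subset_UNIV)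
    then have "card {s<..x} \<le> card {s..<v}" using card_inj_on_le[OF _ sub] by simp
    then show False using x sv by simp
  qed
  have inc_out: "\<And>y z. v < y \<Longrightarrow> y < z \<Longrightarrow> z \<le> n \<Longrightarrow> \<pi> y < \<pi> z"
  proof (rule ccontr)
    fix y z assume yz: "v < y" "y < z" "z \<le> n" "\<not> \<pi> y < \<pi> z"
    have "\<pi> z < \<pi> y" using yz injE[of y z] by fastforce
    moreover have "\<pi> (Suc s) < \<pi> s" using B1[of "Suc s"] sv v_def by auto
    moreover have "\<pi> s < \<pi> z" using B2[of z] yz v_def by auto
    ultimately show False using N2143[of s "Suc s" y z] yz s_rng sv by auto
  qed
  have out_id: "\<And>x. v < x \<Longrightarrow> \<pi> x = x"
  proof -
    fix x assume x: "v < x"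
    show "\<pi> x = x"
    proof (cases "x \<le> n")
      case False then show ?thesis using fix_out by auto
    next
      case True
      have m: "\<And>y. Suc v \<le> y \<Longrightarrow> y < n \<Longrightarrow> \<pi> y < \<pi> (Suc y)" using inc_out by auto
      have "\<pi> (Suc v) + (x - Suc v) \<le> \<pi> x" using inc_lower[where f=\<pi> and a="Suc v" and b=n and x=x, OF m] x True by auto
      moreover have "\<pi> x + (n - x) \<le> \<pi> n" using inc_upper[where f=\<pi> and a="Suc v" and b=n and x=x, OF m] x True by auto
      moreover have "Suc v \<le> \<pi> (Suc v)" using B2[of "Suc v"] x True by auto
      moreover have "\<pi> n \<le> n" using rng[of n] True x by auto
      ultimately show ?thesis using x True by linarith
    qed
  qed
  have blk: "\<And>x. s \<le> x \<Longrightarrow> x \<le> v \<Longrightarrow> s \<le> \<pi> x \<and> \<pi> x \<le> v"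
    using ge_s B1 v_def by (metis le_eq_less_or_eq less_imp_le_nat)
  obtain p where pp: "\<pi> p = s" using surj by blast
  have sp: "s < p"
  proof -
    have "\<not> p < s" using s2[of p] pp by auto
    moreover have "p \<noteq> s" using pp s1 by auto
    ultimately show ?thesis by simp
  qed
  have pv: "p \<le> v" using out_id[of p] pp sv by (metis not_le less_asym)
  have headdec: "\<And>i i'. s \<le> i \<Longrightarrow> i < i' \<Longrightarrow> i' < p \<Longrightarrow> \<pi> i' < \<pi> i"
  proof (rule ccontr)
    fix i i' assume h: "s \<le> i" "i < i'" "i' < p" "\<not> \<pi> i' < \<pi> i"
    have "\<pi> i < \<pi> i'" using h injE[of i i'] by fastforce
    moreover have "\<pi> p < \<pi> i"
    proof -
      have "i \<noteq> p" using h by auto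
      then have "\<pi> i \<noteq> \<pi> p" using injE by blast
      then show ?thesis using ge_s[of i] h pp by auto
    qed
    ultimately show False using N231[of i i' p] h s_rng pv vn by auto
  qed
  have Sqp: "\<pi> (\<pi> p) = v" using pp v_def by simp
  have Sqblk: "\<And>x. s \<le> x \<Longrightarrow> x \<le> v \<Longrightarrow> s \<le> \<pi> (\<pi> x) \<and> \<pi> (\<pi> x) \<le> v" using blk by blast
  have Sqne: "\<And>x y. x \<noteq> y \<Longrightarrow> \<pi> (\<pi> x) \<noteq> \<pi> (\<pi> y)" using injE by blast
  have claim1: "\<And>i k. s \<le> i \<Longrightarrow> i < p \<Longrightarrow> p < k \<Longrightarrow> k \<le> v \<Longrightarrow> \<pi> (\<pi> i) < \<pi> (\<pi> k)"
  proof (rule ccontr)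
    fix i k assume h: "s \<le> i" "i < p" "p < k" "k \<le> v" "\<not> \<pi> (\<pi> i) < \<pi> (\<pi> k)"
    have "\<pi> (\<pi> k) < \<pi> (\<pi> i)" using h Sqne[of i k] by fastforce
    moreover have "\<pi> (\<pi> i) < \<pi> (\<pi> p)" using Sqblk[of i] Sqne[of i p] Sqp h pv
      by fastforce
    ultimately show False using NQ[of i p k] h s_rng vn by auto
  qed
  have b1: "\<And>i. s \<le> i \<Longrightarrow> i < p \<Longrightarrow> \<pi> (\<pi> i) < p"
  proof (rule ccontr)
    fix i assume h: "s \<le> i" "i < p" "\<not> \<pi> (\<pi> i) < p"
    have iv: "\<pi> (\<pi> i) < v" using Sqblk[of i] Sqne[of i p] Sqp h pv by fastforce
    have sub: "(\<lambda>x. \<pi> (\<pi> x)) ` insert i {p<..v} \<subseteq> {p..<v}"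
    proof
      fix w assume "w \<in> (\<lambda>x. \<pi> (\<pi> x)) ` insert i {p<..v}"
      then obtain k where k: "k \<in> insert i {p<..v}" "w = \<pi> (\<pi> k)" by blast
      show "w \<in> {p..<v}"
      proof (cases "k = i")
        case True then show ?thesis using k h iv by auto
      next
        case False
        then have k2: "p < k" "k \<le> v" using k by auto
        have "\<pi> (\<pi> i) < \<pi> (\<pi> k)" using claim1[of i k] h k2 by auto
        moreover have "\<pi> (\<pi> k) \<noteq> v" using Sqne[of k p] Sqp k2 by auto
        moreover have "\<pi> (\<pi> k) \<le> v" using Sqblk[of k] k2 sp by auto
        ultimately show ?thesis using k h by auto
      qed
    qed
    have "inj_on (\<lambda>x. \<pi> (\<pi> x)) (insert i {p<..v})" using Sqne by (meson inj_onI)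
    then have "card (insert i {p<..v}) \<le> card {p..<v}" using card_inj_on_le[OF _ sub] by simp
    then show False using h by simp
  qed
  have b2: "\<And>k. p < k \<Longrightarrow> k \<le> v \<Longrightarrow> p \<le> \<pi> (\<pi> k)"
  proof (rule ccontr)
    fix k assume h: "p < k" "k \<le> v" "\<not> p \<le> \<pi> (\<pi> k)"
    have sub: "(\<lambda>x. \<pi> (\<pi> x)) ` insert k {s..<p} \<subseteq> {s..<p}"
    proof
      fix w assume "w \<in> (\<lambda>x. \<pi> (\<pi> x)) ` insert k {s..<p}"
      then obtain i where i: "i \<in> insert k {s..<p}" "w = \<pi> (\<pi> i)" by blast
      show "w \<in> {s..<p}"
      proof (cases "i = k")
        case True then show ?thesis using i h Sqblk[of k] sp by auto
      next
        case False
        then have i2: "s \<le> i" "i < p" using i by auto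
        have "\<pi> (\<pi> i) < \<pi> (\<pi> k)" using claim1[of i k] h i2 by auto
        moreover have "s \<le> \<pi> (\<pi> i)" using Sqblk[of i] i2 pv by auto
        ultimately show ?thesis using i h by auto
      qed
    qed
    have "inj_on (\<lambda>x. \<pi> (\<pi> x)) (insert k {s..<p})" using Sqne by (meson inj_onI)
    then have "card (insert k {s..<p}) \<le> card {s..<p}" using card_inj_on_le[OF _ sub] by simp
    then show False using h by simp
  qed
  define d where "d = \<pi> (p - 1)"
  have ps: "s \<le> p - 1" "p - 1 < p" using sp by auto
  have d_gt: "s < d" using ge_s[of "p - 1"] ps injE[of "p - 1" p] pp d_def by fastforce
  have bv: "p < v \<Longrightarrow> \<pi> v < d"
  proof (rule ccontr)
    assume h: "p < v" "\<not> \<pi> v < d"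
    define b where "b = \<pi> v"
    have bd: "d < b" using h injE[of v "p - 1"] d_def b_def ps by fastforce
    have b_lt: "b < p" using b1[of s] sp v_def b_def by auto
    define G where "G = {y. s \<le> y \<and> y < p \<and> \<pi> y < p}"
    have Gsub: "\<pi> ` G \<subseteq> G"
    proof
      fix w assume "w \<in> \<pi> ` G"
      then obtain y where y: "y \<in> G" "w = \<pi> y" by auto
      then show "w \<in> G" using ge_s[of y] b1[of y] unfolding G_def by auto
    qed
    have fin: "finite G" unfolding G_def by (rule finite_subset[of _ "{s..<p}"]) auto
    have GG: "\<pi> ` G = G" using endo_inj_surj[OF fin Gsub] inj by (meson inj_on_subset subset_UNIV)
    have dG: "d \<in> G" unfolding G_def using d_gt bd b_lt b1[of "p - 1"] ps d_def by auto
    have "\<pi> b < \<pi> d" using headdec[of d b] d_gt bd b_lt by auto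
    then have bG: "b \<in> G" unfolding G_def using d_gt bd b_lt dG unfolding G_def by auto
    then obtain y where y: "y \<in> G" "\<pi> y = b" using GG by (metis imageE)
    then have "y = v" using injE b_def by auto
    then show False using y h unfolding G_def by auto
  qed
  have tail_lt: "\<And>t. p < t \<Longrightarrow> t \<le> v \<Longrightarrow> \<pi> t < d"
  proof -
    fix t assume t: "p < t" "t \<le> v"
    show "\<pi> t < d"
    proof (cases "t = v")
      case True then show ?thesis using bv t by auto
    next
      case False
      show ?thesis
      proof (rule ccontr)
        assume "\<not> \<pi> t < d"
        then have "d < \<pi> t" using injE[of t "p - 1"] d_def t ps by fastforce
        moreover have "\<pi> v < d" using bv t by auto
        moreover have "p - 1 < t" "1 \<le> p - 1" "t < v" using t False ps s_rng by auto
        ultimately show False using N231[of "p - 1" t v] vn d_def by blast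
      qed
    qed
  qed
  have tail_rng: "\<And>t. p \<le> t \<Longrightarrow> t \<le> v \<Longrightarrow> s \<le> \<pi> t \<and> \<pi> t < d"
    using tail_lt pp d_gt ge_s sp by (metis le_eq_less_or_eq less_imp_le_nat order.trans)
  have card_e: "v - p + 1 \<le> d - s"
  proof -
    have sub: "\<pi> ` {p..v} \<subseteq> {s..<d}" using tail_rng by auto
    have "inj_on \<pi> {p..v}" using inj by (meson inj_on_subset subset_UNIV)
    then have "card {p..v} \<le> card {s..<d}" using card_inj_on_le[OF _ sub] by simp
    then show ?thesis using pv by simp
  qed
  have hd: "\<And>x. s \<le> x \<Longrightarrow> x < p - 1 \<Longrightarrow> \<pi> (Suc x) < \<pi> x" using headdec by auto
  have head: "\<And>x. s \<le> x \<Longrightarrow> x < p \<Longrightarrow> \<pi> x = v + s - x"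
  proof -
    fix x assume x: "s \<le> x" "x < p"
    have "\<pi> x + (x - s) \<le> \<pi> s" using dec_upper[where f=\<pi> and a=s and b="p - 1" and x=x, OF hd] x by auto
    moreover have "\<pi> (p - 1) + (p - 1 - x) \<le> \<pi> x" using dec_lower[where f=\<pi> and a=s and b="p - 1" and x=x, OF hd] x by auto
    ultimately show "\<pi> x = v + s - x" using card_e d_def v_def x sp pv d_gt by arith
  qed
  have d_eq: "d = v + s - p + 1" using head[of "p - 1"] ps d_def sp pv by auto
  have key: "v + s < 2 * p"
  proof (rule ccontr)
    assume h: "\<not> v + s < 2 * p"
    obtain k where k: "\<pi> k = p" using surj by blast
    have "\<not> k < s" using s2[of k] k sp by auto
    moreover have "\<not> (s \<le> k \<and> k < p)" using head[of k] k h by auto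
    moreover have "\<not> v < k" using out_id[of k] k pv by auto
    moreover have "k \<noteq> p" using k pp sp by auto
    ultimately have "p < k" "k \<le> v" by auto
    then have "p \<le> \<pi> (\<pi> k)" using b2 by auto
    then show False using k pp sp by auto
  qed
  have tail_inc: "\<And>y z. p \<le> y \<Longrightarrow> y < z \<Longrightarrow> z \<le> v \<Longrightarrow> \<pi> y < \<pi> z"
  proof (rule ccontr)
    fix y z assume h: "p \<le> y" "y < z" "z \<le> v" "\<not> \<pi> y < \<pi> z"
    have zy: "\<pi> z < \<pi> y" using h injE[of y z] by fastforce
    have "y \<noteq> p" using zy tail_rng[of z] h pp by auto
    then have py: "p < y" using h by auto
    have zs: "s < \<pi> z" using tail_rng[of z] h injE[of z p] pp py by fastforce
    have e1: "\<pi> (\<pi> (v + s - z)) = \<pi> z" using head[of "v + s - z"] h py key by auto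
    have e2: "\<pi> (\<pi> (v + s - y)) = \<pi> y" using head[of "v + s - y"] h py key by auto
    have e3: "\<pi> (\<pi> (v + s - p)) = s" using head[of "v + s - p"] h py key pp pv by auto
    have ar: "1 \<le> v + s - z" "v + s - z < v + s - y" "v + s - y < v + s - p" "v + s - p \<le> n"
      using h py key s_rng vn sp by arith+
    show False using NQ[OF ar] e1 e2 e3 zs zy by auto
  qed
  have tail: "\<And>t. p \<le> t \<Longrightarrow> t \<le> v \<Longrightarrow> \<pi> t = t + s - p"
  proof -
    fix t assume t: "p \<le> t" "t \<le> v"
    have m: "\<And>x. p \<le> x \<Longrightarrow> x < v \<Longrightarrow> \<pi> x < \<pi> (Suc x)" using tail_inc by auto
    have "\<pi> p + (t - p) \<le> \<pi> t" using inc_lower[where f=\<pi> and a=p and b=v and x=t, OF m] t by auto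
    moreover have "\<pi> t + (v - t) \<le> \<pi> v" using inc_upper[where f=\<pi> and a=p and b=v and x=t, OF m] t by auto
    moreover have "\<pi> v < d" using tail_rng[of v] pv by auto
    ultimately show "\<pi> t = t + s - p" using d_eq pp t sp by arith
  qed
  have "\<pi> = Q s p v"
  proof
    fix x show "\<pi> x = Q s p v x"
      unfolding Q_def using s2[of x] head[of x] tail[of x] out_id[of x] by auto
  qed
  moreover have "(v,p,s) \<in> T n" unfolding T_def using s_rng sp pv vn key by auto
  ultimately show ?thesis by blast
qed



definition hh :: "nat \<Rightarrow> nat" where "hh v = (\<Sum>p\<in>{1..v}. 2*p - v - 1)"
definition FF :: "nat \<Rightarrow> nat" where "FF n = (\<Sum>v\<in>{1..n}. hh v)"

lemma hh_rec: "hh (Suc (Suc v)) = hh v + v + 1"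
proof -
  have "hh (Suc (Suc v)) = (\<Sum>p\<in>{1..Suc (Suc v)}. 2*p - Suc (Suc v) - 1)" by (simp add: hh_def)
  also have "\<dots> = (2*1 - Suc (Suc v) - 1) + (\<Sum>p\<in>{Suc 1..Suc (Suc v)}. 2*p - Suc (Suc v) - 1)"
    by (rule sum.atLeast_Suc_atMost) simp
  also have "\<dots> = (\<Sum>p\<in>{1..Suc v}. 2*Suc p - Suc (Suc v) - 1)"
    by (simp only: sum.shift_bounds_cl_Suc_ivl)
  also have "\<dots> = (\<Sum>p\<in>{1..Suc v}. 2*p - v - 1)" by simp
  also have "\<dots> = hh v + (2 * Suc v - v - 1)" by (simp add: hh_def)
  finally show ?thesis by simp
qed

lemma hh_closed: "hh (2*k) = k*k \<and> hh (2*k+1) = k*k + k"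
proof (induct k)
  case 0 then show ?case by (simp add: hh_def)
next
  case (Suc k)
  have a: "2 * Suc k = Suc (Suc (2*k))" by simp
  have b: "2 * Suc k + 1 = Suc (Suc (2*k+1))" by simp
  have r1: "hh (2 * Suc k) = hh (2*k) + 2*k + 1" unfolding a by (rule hh_rec)
  have r2: "hh (2 * Suc k + 1) = hh (2*k+1) + (2*k+1) + 1" unfolding b by (rule hh_rec)
  have i1: "hh (2*k) = k*k" using Suc by blast
  have i2: "hh (2*k+1) = k*k+k" using Suc by blast
  show ?case unfolding r1 r2 i1 i2 by (simp add: algebra_simps)
qed

lemma FF_closed: "real (FF (2*k)) = (4 * real k ^ 3 + 3 * real k ^ 2 - real k) / 6
   \<and> real (FF (2*k+1)) = (4 * real k ^ 3 + 9 * real k ^ 2 + 5 * real k) / 6"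
proof (induct k)
  case 0 then show ?case by (simp add: FF_def hh_def)
next
  case (Suc k)
  have a: "FF (2 * Suc k) = FF (2*k+1) + hh (2 * Suc k)"
    by (simp add: FF_def)
  have b: "FF (2 * Suc k + 1) = FF (2 * Suc k) + hh (2 * Suc k + 1)"
    by (simp add: FF_def)
  have H1: "hh (2 * Suc k) = Suc k * Suc k" using hh_closed[of "Suc k"] by (rule conjunct1)
  have H2: "hh (2 * Suc k + 1) = Suc k * Suc k + Suc k" using hh_closed[of "Suc k"] by (rule conjunct2)
  have h1: "real (hh (2 * Suc k)) = (real k + 1)^2" unfolding H1 by (simp add: power2_eq_square algebra_simps)
  have h2: "real (hh (2 * Suc k + 1)) = (real k + 1)^2 + real k + 1" unfolding H2 by (simp add: power2_eq_square algebra_simps)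
  have e1: "real (FF (2 * Suc k)) = (4 * real (Suc k) ^ 3 + 3 * real (Suc k) ^ 2 - real (Suc k)) / 6"
    using Suc a h1 by (simp add: field_simps power2_eq_square power3_eq_cube)
  have e2: "real (FF (2 * Suc k + 1)) = (4 * real (Suc k) ^ 3 + 9 * real (Suc k) ^ 2 + 5 * real (Suc k)) / 6"
    using e1 b h2 by (simp add: field_simps power2_eq_square power3_eq_cube)
  show ?case using e1 e2 by blast
qed

lemma card_T: "card (T n) = FF n"
proof -
  have "T n = Sigma {1..n} (\<lambda>v. Sigma {1..v} (\<lambda>p. {1..<2*p-v}))"
    unfolding T_def by auto
  then have "card (T n) = (\<Sum>v\<in>{1..n}. \<Sum>p\<in>{1..v}. card {1..<2*p-v})" by simp
  then show ?thesis unfolding FF_def hh_def by simp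
qed



definition S231 :: "nat \<Rightarrow> (nat \<Rightarrow> nat) set" where
  "S231 n = {\<pi>. \<pi> permutes {1..n} \<and> avoids n \<pi> [2,3,1] \<and> avoids n \<pi> [2,1,4,3] \<and> avoids n (\<pi> \<circ> \<pi>) [2,3,1]}"
definition S312 :: "nat \<Rightarrow> (nat \<Rightarrow> nat) set" where
  "S312 n = {\<pi>. \<pi> permutes {1..n} \<and> avoids n \<pi> [3,1,2] \<and> avoids n \<pi> [2,1,4,3] \<and> avoids n (\<pi> \<circ> \<pi>) [3,1,2]}"

lemma S231_alt: "S231 n = {\<pi>. \<pi> permutes {1..n} \<and> \<not> c231 n \<pi> \<and> \<not> c2143 n \<pi> \<and> \<not> c231 n (\<pi> \<circ> \<pi>)}"
proof -
  have "\<pi> \<in> S231 n \<longleftrightarrow> \<pi> permutes {1..n} \<and> \<not> c231 n \<pi> \<and> \<not> c2143 n \<pi> \<and> \<not> c231 n (\<pi> \<circ> \<pi>)" for \<pi>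
  proof (cases "\<pi> permutes {1..n}")
    case True
    have i1: "inj \<pi>" using permutes_inj[OF True] .
    have i2: "inj (\<pi> \<circ> \<pi>)" using permutes_inj[OF permutes_compose[OF True True]] .
    show ?thesis unfolding S231_def avoids_def using contains231[OF i1] contains231[OF i2] contains2143[OF i1] True by auto
  qed (auto simp: S231_def)
  then show ?thesis by auto
qed

lemma S312_alt: "S312 n = {\<pi>. \<pi> permutes {1..n} \<and> \<not> c312 n \<pi> \<and> \<not> c2143 n \<pi> \<and> \<not> c312 n (\<pi> \<circ> \<pi>)}"
proof -
  have "\<pi> \<in> S312 n \<longleftrightarrow> \<pi> permutes {1..n} \<and> \<not> c312 n \<pi> \<and> \<not> c2143 n \<pi> \<and> \<not> c312 n (\<pi> \<circ> \<pi>)" for \<pi>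
  proof (cases "\<pi> permutes {1..n}")
    case True
    have i1: "inj \<pi>" using permutes_inj[OF True] .
    have i2: "inj (\<pi> \<circ> \<pi>)" using permutes_inj[OF permutes_compose[OF True True]] .
    show ?thesis unfolding S312_def avoids_def using contains312[OF i1] contains312[OF i2] contains2143[OF i1] True by auto
  qed (auto simp: S312_def)
  then show ?thesis by auto
qed

definition Qp :: "nat \<times> nat \<times> nat \<Rightarrow> nat \<Rightarrow> nat" where
  "Qp t = (case t of (v,p,s) \<Rightarrow> Q s p v)"

lemma S231_eq: "S231 n = insert id (Qp ` T n)"
proof
  show "S231 n \<subseteq> insert id (Qp ` T n)"
  proof
    fix \<pi> assume "\<pi> \<in> S231 n"
    then have h: "\<pi> permutes {1..n}" "\<not> c231 n \<pi>" "\<not> c2143 n \<pi>" "\<not> c231 n (\<pi> \<circ> \<pi>)"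
      unfolding S231_alt by auto
    show "\<pi> \<in> insert id (Qp ` T n)"
    proof (cases "\<pi> = id")
      case False
      then obtain v p s where "(v,p,s) \<in> T n" "\<pi> = Q s p v" using char[OF h] by blast
      then show ?thesis unfolding Qp_def by force
    qed simp
  qed
next
  show "insert id (Qp ` T n) \<subseteq> S231 n"
  proof
    fix \<pi> assume "\<pi> \<in> insert id (Qp ` T n)"
    then show "\<pi> \<in> S231 n"
    proof
      assume "\<pi> = id"
      then show ?thesis unfolding S231_alt c231_def c2143_def by (auto simp: permutes_id)
    next
      assume "\<pi> \<in> Qp ` T n"
      then obtain v p s where t: "(v,p,s) \<in> T n" "\<pi> = Q s p v" unfolding Qp_def by force
      show ?thesis unfolding S231_alt using Q_perm[OF t(1)] Q_231[OF t(1)] Q_2143[OF t(1)] QQ_231[OF t(1)] t(2) by auto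
    qed
  qed
qed

lemma Qp_inj: "inj_on Qp (T n)"
proof (rule inj_onI)
  fix x y assume x: "x \<in> T n" and y: "y \<in> T n" and e: "Qp x = Qp y"
  obtain v p s where xx: "x = (v,p,s)" by (cases x) auto
  obtain v' p' s' where yy: "y = (v',p',s')" by (cases y) auto
  have a: "1 \<le> s" "s < p" "p \<le> v" "v \<le> n" using x xx unfolding T_def by auto
  have b: "1 \<le> s'" "s' < p'" "p' \<le> v'" "v' \<le> n" using y yy unfolding T_def by auto
  have e': "\<And>z. Q s p v z = Q s' p' v' z" using e xx yy unfolding Qp_def by auto
  have ss: "s = s'"
  proof (rule ccontr)
    assume "s \<noteq> s'"
    then consider "s < s'" | "s' < s" by linarith
    then show False
    proof cases
      case 1 then show False using e'[of s] a b unfolding Q_def by auto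
    next
      case 2 then show False using e'[of s'] a b unfolding Q_def by auto
    qed
  qed
  have vv: "v = v'" using e'[of s] a b ss unfolding Q_def by auto
  have pp: "p = p'"
  proof (rule ccontr)
    assume "p \<noteq> p'"
    then consider "p < p'" | "p' < p" by linarith
    then show False
    proof cases
      case 1 then show False using e'[of p] a b ss vv unfolding Q_def by auto
    next
      case 2 then show False using e'[of p'] a b ss vv unfolding Q_def by auto
    qed
  qed
  show "x = y" using xx yy ss vv pp by simp
qed

lemma id_notin: "id \<notin> Qp ` T n"
proof
  assume "id \<in> Qp ` T n"
  then obtain v p s where t: "(v,p,s) \<in> T n" "id = Q s p v" unfolding Qp_def by force
  then have "Q s p v s = s" by simp
  then show False using t(1) unfolding Q_def T_def by auto
qed

lemma card_S231: "card (S231 n) = FF n + 1"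
proof -
  have fin: "finite (T n)"
    by (rule finite_subset[of _ "{0..n} \<times> {0..n} \<times> {0..n}"]) (auto simp: T_def)
  have "card (S231 n) = Suc (card (Qp ` T n))"
    unfolding S231_eq by (rule card_insert_disjoint[OF finite_imageI[OF fin] id_notin])
  also have "\<dots> = Suc (card (T n))" using card_image[OF Qp_inj] by simp
  finally show ?thesis using card_T by simp
qed

lemma S312_img: "S312 n = inv ` S231 n"
proof
  show "inv ` S231 n \<subseteq> S312 n"
  proof
    fix \<sigma> assume "\<sigma> \<in> inv ` S231 n"
    then obtain \<pi> where p: "\<pi> \<in> S231 n" "\<sigma> = inv \<pi>" by auto
    then have h: "\<pi> permutes {1..n}" "\<not> c231 n \<pi>" "\<not> c2143 n \<pi>" "\<not> c231 n (\<pi> \<circ> \<pi>)"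
      unfolding S231_alt by auto
    have pi: "inv \<pi> permutes {1..n}" using permutes_inv[OF h(1)] .
    have b: "bij \<pi>" using permutes_bij[OF h(1)] .
    have pp: "\<pi> \<circ> \<pi> permutes {1..n}" using permutes_compose[OF h(1) h(1)] .
    have io: "inv \<pi> \<circ> inv \<pi> = inv (\<pi> \<circ> \<pi>)" using o_inv_distrib[OF b b] by simp
    have "\<not> c312 n (inv \<pi>)" using inv312[OF pi] permutes_inv_inv[OF h(1)] h(2) by metis
    moreover have "\<not> c2143 n (inv \<pi>)" using inv2143[OF pi] permutes_inv_inv[OF h(1)] h(3) by metis
    moreover have "\<not> c312 n (inv (\<pi> \<circ> \<pi>))" using inv312[OF permutes_inv[OF pp]] permutes_inv_inv[OF pp] h(4) by metis
    ultimately show "\<sigma> \<in> S312 n" unfolding S312_alt using p pi io by auto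
  qed
next
  show "S312 n \<subseteq> inv ` S231 n"
  proof
    fix \<sigma> assume "\<sigma> \<in> S312 n"
    then have h: "\<sigma> permutes {1..n}" "\<not> c312 n \<sigma>" "\<not> c2143 n \<sigma>" "\<not> c312 n (\<sigma> \<circ> \<sigma>)"
      unfolding S312_alt by auto
    define \<pi> where "\<pi> = inv \<sigma>"
    have pi: "\<pi> permutes {1..n}" using permutes_inv[OF h(1)] \<pi>_def by simp
    have b: "bij \<sigma>" using permutes_bij[OF h(1)] .
    have pp: "\<sigma> \<circ> \<sigma> permutes {1..n}" using permutes_compose[OF h(1) h(1)] .
    have io: "\<pi> \<circ> \<pi> = inv (\<sigma> \<circ> \<sigma>)" using o_inv_distrib[OF b b] \<pi>_def by simp
    have "\<not> c231 n \<pi>" using inv231[OF pi] permutes_inv_inv[OF h(1)] h(2) \<pi>_def by metis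
    moreover have "\<not> c2143 n \<pi>" using inv2143[OF pi] permutes_inv_inv[OF h(1)] h(3) \<pi>_def by metis
    moreover have "\<not> c231 n (inv (\<sigma> \<circ> \<sigma>))" using inv231[OF permutes_inv[OF pp]] permutes_inv_inv[OF pp] h(4) by metis
    ultimately have "\<pi> \<in> S231 n" unfolding S231_alt using pi io by auto
    moreover have "\<sigma> = inv \<pi>" using permutes_inv_inv[OF h(1)] \<pi>_def by simp
    ultimately show "\<sigma> \<in> inv ` S231 n" by auto
  qed
qed

lemma card_S312: "card (S312 n) = card (S231 n)"
proof -
  have "inj_on inv (S231 n)"
  proof (rule inj_onI)
    fix x y assume xy: "x \<in> S231 n" "y \<in> S231 n" "inv x = inv y"
    have px: "x permutes {1..n}" using xy(1) unfolding S231_def by blast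
    have py: "y permutes {1..n}" using xy(2) unfolding S231_def by blast
    have "x = inv (inv x)" using permutes_inv_inv[OF px] by simp
    also have "\<dots> = inv (inv y)" using xy(3) by simp
    also have "\<dots> = y" using permutes_inv_inv[OF py] by simp
    finally show "x = y" .
  qed
  then show ?thesis unfolding S312_img by (rule card_image)
qed

theorem theorem4p4:
  fixes n :: nat
  assumes "n \<ge> 1"
  shows "c_count n [2,3,1] [2,1,4,3] [2,3,1] = c_count n [3,1,2] [2,1,4,3] [3,1,2]
       \<and> (\<forall>k::nat. n = 2 * k \<longrightarrow>
            real (c_count n [2,3,1] [2,1,4,3] [2,3,1])
              = (4 * real k ^ 3 + 3 * real k ^ 2 - real k) / 6 + 1)
       \<and> (\<forall>k::nat. n = 2 * k + 1 \<longrightarrow>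
            real (c_count n [2,3,1] [2,1,4,3] [2,3,1])
              = (4 * real k ^ 3 + 9 * real k ^ 2 + 5 * real k) / 6 + 1)"
proof -
  have c1: "c_count n [2,3,1] [2,1,4,3] [2,3,1] = card (S231 n)" unfolding c_count_def S231_def ..
  have c2: "c_count n [3,1,2] [2,1,4,3] [3,1,2] = card (S312 n)" unfolding c_count_def S312_def ..
  show ?thesis unfolding c1 c2 card_S312 card_S231 using FF_closed by auto
qed


end
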